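(* For every integer $\ell\ge1$, the Wu function $\varphi_{\ell,\ell}$ satisfies, for $0\le r\le2$, $$\varphi_{\ell,\ell}(r)=2^{\ell+1}\Gamma(\ell+1)\left[\frac{1^{(\ell)}}{(3/2)^{(\ell)}}-\frac r2\,{}_2F_1\!\left(-\ell,\tfrac12;\tfrac32;\tfrac{r^2}{4}\right)\right].$$
   Context: $f_\ell(r)=(1-r^2)_+^\ell$, $f_\ell*f_\ell(r)=\int_{\mathbb{R}}f_\ell(|y|)f_\ell(|r-y|)dy$ for $r\ge0$; $\mathscr{D}\varphi(r)=-\frac1r\varphi'(r)$; the Wu function is $\varphi_{\ell,k}(r)=\mathscr{D}^k(f_\ell*f_\ell)(r)$ ($k$-fold iterate). Pochhammer symbol: $a^{(0)}=1$, $a^{(n)}=a(a+1)\cdots(a+n-1)$. Hypergeometric function: ${}_2F_1(a,b;c;z)=\sum_{n\ge0}\frac{a^{(n)}b^{(n)}}{c^{(n)}}\frac{z^n}{n!}$. *)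

theory Defs
  imports "HOL-Analysis.Analysis"
begin

definition trunc_pow :: "nat \<Rightarrow> real \<Rightarrow> real" where
  "trunc_pow l r = (max 0 (1 - r\<^sup>2)) ^ l"

definition self_conv :: "nat \<Rightarrow> real \<Rightarrow> real" where
  "self_conv l r = integral UNIV (\<lambda>y. trunc_pow l \<bar>y\<bar> * trunc_pow l \<bar>r - y\<bar>)"

definition opD :: "(real \<Rightarrow> real) \<Rightarrow> real \<Rightarrow> real" where
  "opD \<phi> r = - (1 / r) * deriv \<phi> r"

text \<open>k-fold iterate applied to f_l * f_l (literal, meaningful for r > 0).\<close>
definition wu_raw :: "nat \<Rightarrow> nat \<Rightarrow> real \<Rightarrow> real" where
  "wu_raw l k = (opD ^^ k) (self_conv l)"

definition wu :: "nat \<Rightarrow> nat \<Rightarrow> real \<Rightarrow> real" where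
  "wu l k r = (if r = 0 then Lim (at_right 0) (wu_raw l k) else wu_raw l k r)"

definition hyp2F1 :: "real \<Rightarrow> real \<Rightarrow> real \<Rightarrow> real \<Rightarrow> real" where
  "hyp2F1 a b c z = (\<Sum>n. pochhammer a n * pochhammer b n / pochhammer c n * z ^ n / fact n)"

end

theory Submission
  imports Defs
begin
lemma deriv_split_at:
  fixes f :: "real \<Rightarrow> real"
  assumes "(f has_real_derivative D) (at x within {..x})"
      and "(f has_real_derivative D) (at x within {x..})"
  shows "(f has_real_derivative D) (at x)"
proof -
  have U: "{..x} \<union> {x..} = (UNIV::real set)" by auto
  have "((\<lambda>y. (f y - f x) / (y - x)) \<longlongrightarrow> D) (at x within ({..x} \<union> {x..}))"
    by (rule Lim_within_Un[THEN iffD2], rule conjI)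
       (use assms in \<open>simp_all only: has_field_derivative_iff\<close>)
  then show ?thesis unfolding has_field_derivative_iff U by simp
qed

lemma psi_deriv:
  assumes "m \<ge> 2"
  shows "((\<lambda>u::real. (max 0 u)^m) has_real_derivative (real m * (max 0 u)^(m-1))) (at u)"
proof (cases "u > 0")
  case True
  have "((\<lambda>u::real. u^m) has_real_derivative (real m * u^(m-1))) (at u)"
    by (auto intro!: derivative_eq_intros)
  then have "((\<lambda>u::real. u^m) has_real_derivative (real m * (max 0 u)^(m-1))) (at u)"
    using True by simp
  then show ?thesis
    by (rule has_field_derivative_transform_within_open[where S="{0<..}"]) (use True in auto)
next
  case False
  show ?thesis
  proof (cases "u < 0")
    case True
    have "((\<lambda>u::real. 0) has_real_derivative (real m * (max 0 u)^(m-1))) (at u)"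
    proof -
      show ?thesis using True assms by (simp add: zero_power)
    qed
    then show ?thesis
      by (rule has_field_derivative_transform_within_open[where S="{..<0}"]) (use True assms in auto)
  next
    case False
    with \<open>\<not> u > 0\<close> have u0: "u = 0" by auto
    have m1: "m - 1 \<noteq> 0" using assms by auto
    have A: "((\<lambda>u::real. (max 0 u)^m) has_real_derivative 0) (at 0 within {..0})"
    proof -
      have "((\<lambda>u::real. 0) has_real_derivative 0) (at 0 within {..0})" by simp
      then show ?thesis
        by (rule has_field_derivative_transform_within[where d=1]) (use assms in auto)
    qed
    have B: "((\<lambda>u::real. (max 0 u)^m) has_real_derivative 0) (at 0 within {0..})"
    proof -
      have "((\<lambda>u::real. u^m) has_real_derivative (real m * 0^(m-1))) (at 0 within {0..})"
        by (auto intro!: derivative_eq_intros)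
      then have "((\<lambda>u::real. u^m) has_real_derivative 0) (at 0 within {0..})" using assms by (simp add: zero_power)
      then show ?thesis
        by (rule has_field_derivative_transform_within[where d=1]) auto
    qed
    show ?thesis using deriv_split_at[OF A B] u0 assms by (simp add: zero_power)
  qed
qed

definition dtp :: "nat \<Rightarrow> real \<Rightarrow> real" where
  "dtp m z = - 2 * real m * z * trunc_pow (m - 1) z"

lemma tp_deriv:
  assumes "m \<ge> 2"
  shows "(trunc_pow m has_real_derivative dtp m z) (at z)"
proof -
  have "((\<lambda>z. (max 0 (1 - z\<^sup>2))^m) has_real_derivative (real m * (max 0 (1 - z\<^sup>2))^(m-1)) * (- 2 * z)) (at z)"
    by (rule DERIV_chain2[OF psi_deriv[OF assms]]) (auto intro!: derivative_eq_intros)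
  then show ?thesis
    unfolding trunc_pow_def[abs_def] dtp_def by (simp add: algebra_simps)
qed

lemma tp_cont [continuous_intros]: "continuous_on S (trunc_pow m)"
  unfolding trunc_pow_def[abs_def] by (intro continuous_intros)

lemma dtp_cont [continuous_intros]: "continuous_on S (dtp m)"
  unfolding dtp_def[abs_def] by (intro continuous_intros)

lemma tp_zero: "m \<ge> 1 \<Longrightarrow> \<bar>z\<bar> \<ge> 1 \<Longrightarrow> trunc_pow m z = 0"
proof -
  assume "m \<ge> 1" "\<bar>z\<bar> \<ge> 1"
  then have "1 - z\<^sup>2 \<le> 0"
    using abs_square_less_1[of z] by linarith
  then show ?thesis using \<open>m \<ge> 1\<close> unfolding trunc_pow_def by (simp add: max_def)
qed

lemma tp_inside: "\<bar>z\<bar> \<le> 1 \<Longrightarrow> trunc_pow m z = (1 - z\<^sup>2)^m"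
proof -
  assume "\<bar>z\<bar> \<le> 1"
  then have "z\<^sup>2 \<le> 1" by (simp add: abs_square_le_1)
  then show ?thesis unfolding trunc_pow_def by simp
qed

lemma tp_Suc: "m \<ge> 1 \<Longrightarrow> trunc_pow (Suc m) z = (1 - z\<^sup>2) * trunc_pow m z"
  by (cases "\<bar>z\<bar> \<le> 1") (auto simp: tp_inside tp_zero)

lemma tp_abs: "trunc_pow m \<bar>z\<bar> = trunc_pow m z"
  unfolding trunc_pow_def by simp

lemma integral_UNIV_supp:
  fixes k :: "real \<Rightarrow> real"
  assumes "\<And>y. y \<notin> S \<Longrightarrow> k y = 0"
  shows "integral UNIV k = integral S k"
proof -
  have "k = (\<lambda>x. if x \<in> S then k x else 0)" using assms by auto
  then have "integral UNIV k = integral UNIV (\<lambda>x. if x \<in> S then k x else 0)" by simp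
  also have "\<dots> = integral S k" by (rule integral_restrict_UNIV)
  finally show ?thesis .
qed

lemma conv_reflect:
  fixes f g :: "real \<Rightarrow> real"
  assumes cf: "continuous_on UNIV f" and cg: "continuous_on UNIV g"
    and sf: "\<And>y. \<bar>y\<bar> \<ge> 1 \<Longrightarrow> f y = 0" and sg: "\<And>y. \<bar>y\<bar> \<ge> 1 \<Longrightarrow> g y = 0"
  shows "integral UNIV (\<lambda>y. f y * g (r - y)) = integral UNIV (\<lambda>y. g y * f (r - y))"
proof -
  define h where "h y = f y * g (r - y)" for y
  have ch: "continuous_on UNIV h" unfolding h_def
    by (intro continuous_intros continuous_on_compose2[OF cg] cf) auto
  have "(h has_integral integral {-1..1} h) (cbox (-1) 1)"
    using integrable_continuous_real[OF continuous_on_subset[OF ch]] by auto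
  from has_integral_affinity[OF this, of "-1" r]
  have "((\<lambda>x. h (- x + r)) has_integral integral {-1..1} h) ((\<lambda>x. - x + r) ` {-1..1})"
    by simp
  moreover have "(\<lambda>x. - x + r) ` {-1..1} = {r - 1..r + 1}"
    using image_affinity_atLeastAtMost[of "-1" r "-1" 1] by simp
  ultimately have A: "((\<lambda>x. g x * f (r - x)) has_integral integral {-1..1} h) {r - 1..r + 1}"
    unfolding h_def by (simp add: mult.commute add.commute)
  have "integral UNIV (\<lambda>y. f y * g (r - y)) = integral {-1..1} h"
    unfolding h_def by (rule integral_UNIV_supp) (use sf in auto)
  also have "\<dots> = integral {r - 1..r + 1} (\<lambda>x. g x * f (r - x))"
    using A by (simp add: integral_unique)
  also have "\<dots> = integral UNIV (\<lambda>y. g y * f (r - y))"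
    by (rule integral_UNIV_supp[symmetric]) (use sf in auto)
  finally show ?thesis .
qed

lemma conv_deriv:
  fixes f g g' :: "real \<Rightarrow> real"
  assumes cf: "continuous_on UNIV f" and cg': "continuous_on UNIV g'"
    and dg: "\<And>z. (g has_real_derivative g' z) (at z)"
  shows "((\<lambda>r. integral {-1..1} (\<lambda>y. f y * g (r - y))) has_real_derivative
            integral {-1..1} (\<lambda>y. f y * g' (r - y))) (at r)"
proof -
  have cg: "continuous_on UNIV g"
    using dg by (meson DERIV_isCont continuous_at_imp_continuous_on)
  have "((\<lambda>r. integral (cbox (-1) 1) (\<lambda>y. f y * g (r - y))) has_real_derivative
            integral (cbox (-1) 1) (\<lambda>y. f y * g' (r - y))) (at r within UNIV)"
  proof (rule leibniz_rule_field_derivative[where fx="\<lambda>r y. f y * g' (r - y)"])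
    fix x t :: real
    show "((\<lambda>x. f t * g (x - t)) has_real_derivative f t * g' (x - t)) (at x within UNIV)"
      by (rule derivative_eq_intros DERIV_chain2[OF dg] | simp)+
  next
    fix x :: real
    show "(\<lambda>y. f y * g (x - y)) integrable_on cbox (-1) 1"
      by (intro integrable_continuous continuous_intros continuous_on_subset[OF cf]
            continuous_on_compose2[OF cg]) auto
  next
    show "continuous_on (UNIV \<times> cbox (-1) 1) (\<lambda>(x, t). f t * g' (x - t))"
    proof -
      have "continuous_on UNIV (\<lambda>p::real\<times>real. f (snd p) * g' (fst p - snd p))"
        by (intro continuous_intros continuous_on_compose2[OF cf] continuous_on_compose2[OF cg']) auto
      then show ?thesis by (rule continuous_on_subset[THEN continuous_on_eq]) (auto simp: split_beta)
    qed
  qed auto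
  then show ?thesis by simp
qed

lemma tp_supp: "m \<ge> 1 \<Longrightarrow> \<bar>y\<bar> \<ge> 1 \<Longrightarrow> trunc_pow m y = 0" by (rule tp_zero)

lemma dtp_supp: "m \<ge> 2 \<Longrightarrow> \<bar>y\<bar> \<ge> 1 \<Longrightarrow> dtp m y = 0"
  unfolding dtp_def using tp_zero[of "m - 1" y] by auto

lemma sc_int:
  assumes "l \<ge> 1"
  shows "self_conv l r = integral {-1..1} (\<lambda>y. trunc_pow l y * trunc_pow l (r - y))"
  unfolding self_conv_def tp_abs
  by (rule integral_UNIV_supp) (use tp_zero[OF assms] in auto)

lemma sc_zero:
  assumes "l \<ge> 1" "r \<ge> 2"
  shows "self_conv l r = 0"
proof -
  have "trunc_pow l \<bar>y\<bar> * trunc_pow l \<bar>r - y\<bar> = 0" for y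
  proof (cases "\<bar>y\<bar> \<ge> 1")
    case True then show ?thesis using tp_zero[OF assms(1)] by (simp add: tp_abs)
  next
    case False then have "\<bar>r - y\<bar> \<ge> 1" using assms by auto
    then show ?thesis using tp_zero[OF assms(1)] by (simp add: tp_abs)
  qed
  then have "(\<lambda>y. trunc_pow l \<bar>y\<bar> * trunc_pow l \<bar>r - y\<bar>) = (\<lambda>_. 0)" by (intro ext)
  then show ?thesis unfolding self_conv_def by simp
qed

definition F1 :: "nat \<Rightarrow> real \<Rightarrow> real" where
  "F1 l r = integral {-1..1} (\<lambda>y. trunc_pow l y * dtp l (r - y))"
definition F2 :: "nat \<Rightarrow> real \<Rightarrow> real" where
  "F2 l r = integral {-1..1} (\<lambda>y. dtp l y * dtp l (r - y))"

lemma sc_deriv: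
  assumes "l \<ge> 2"
  shows "(self_conv l has_real_derivative F1 l r) (at r)"
proof -
  have "self_conv l = (\<lambda>r. integral {-1..1} (\<lambda>y. trunc_pow l y * trunc_pow l (r - y)))"
    using sc_int assms by auto
  then show ?thesis unfolding F1_def
    by (simp only:) (rule conv_deriv[OF tp_cont dtp_cont tp_deriv[OF assms]])
qed

lemma F1_alt:
  assumes "l \<ge> 2"
  shows "F1 l r = integral {-1..1} (\<lambda>y. dtp l y * trunc_pow l (r - y))"
proof -
  have "F1 l r = integral UNIV (\<lambda>y. trunc_pow l y * dtp l (r - y))"
    unfolding F1_def by (rule integral_UNIV_supp[symmetric]) (use tp_zero assms in auto)
  also have "\<dots> = integral UNIV (\<lambda>y. dtp l y * trunc_pow l (r - y))"
    by (rule conv_reflect[OF tp_cont dtp_cont]) (use tp_zero dtp_supp assms in auto)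
  also have "\<dots> = integral {-1..1} (\<lambda>y. dtp l y * trunc_pow l (r - y))"
    by (rule integral_UNIV_supp) (use dtp_supp assms in auto)
  finally show ?thesis .
qed

lemma F1_deriv:
  assumes "l \<ge> 2"
  shows "(F1 l has_real_derivative F2 l r) (at r)"
proof -
  have "F1 l = (\<lambda>r. integral {-1..1} (\<lambda>y. dtp l y * trunc_pow l (r - y)))"
    using F1_alt assms by auto
  then show ?thesis unfolding F2_def
    by (simp only:) (rule conv_deriv[OF dtp_cont dtp_cont tp_deriv[OF assms]])
qed

lemma sc_recur:
  assumes "l \<ge> 2"
  shows "r * F2 l r - 4 * real l * F1 l r = 4 * (real l)\<^sup>2 * r * self_conv (l - 1) r"
proof -
  obtain m where lm: "l = Suc m" and m1: "m \<ge> 1" using assms by (cases l) auto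
  let ?t = "trunc_pow l" and ?d = "dtp l" and ?q = "trunc_pow m"
  have int: "(\<lambda>y. a y * b (r - y)) integrable_on {-1..1}"
    if "continuous_on UNIV a" "continuous_on UNIV b" for a b :: "real \<Rightarrow> real"
    by (intro integrable_continuous_real continuous_intros continuous_on_subset[OF that(1)]
            continuous_on_compose2[OF that(2)]) auto
  have "r * F2 l r - 4 * real l * F1 l r = r * F2 l r - 2 * real l * F1 l r - 2 * real l * F1 l r"
    by simp
  also have "\<dots> = integral {-1..1} (\<lambda>y. r * (?d y * ?d (r - y)) - 2 * real l * (?t y * ?d (r - y))
                    - 2 * real l * (?d y * ?t (r - y)))"
  proof -
    have i1: "(\<lambda>y. r * (?d y * ?d (r - y))) integrable_on {-1..1}"
      by (intro integrable_on_mult_right int dtp_cont)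
    have i2: "(\<lambda>y. 2 * real l * (?t y * ?d (r - y))) integrable_on {-1..1}"
      by (intro integrable_on_mult_right int dtp_cont tp_cont)
    have i3: "(\<lambda>y. 2 * real l * (?d y * ?t (r - y))) integrable_on {-1..1}"
      by (intro integrable_on_mult_right int dtp_cont tp_cont)
    have "integral {-1..1} (\<lambda>y. r * (?d y * ?d (r - y)) - 2 * real l * (?t y * ?d (r - y))
                    - 2 * real l * (?d y * ?t (r - y)))
        = integral {-1..1} (\<lambda>y. r * (?d y * ?d (r - y))) - integral {-1..1} (\<lambda>y. 2 * real l * (?t y * ?d (r - y)))
          - integral {-1..1} (\<lambda>y. 2 * real l * (?d y * ?t (r - y)))"
      using i1 i2 i3 by (simp add: integral_diff integrable_diff)
    also have "\<dots> = r * F2 l r - 2 * real l * F1 l r - 2 * real l * F1 l r"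
      unfolding F2_def
      apply (subst (2) F1_def, subst F1_alt[OF assms])
      apply (simp only: integral_mult_right mult.assoc)
      done
    finally show ?thesis by simp
  qed
  also have "\<dots> = integral {-1..1} (\<lambda>y. 4 * (real l)\<^sup>2 * r * (?q y * ?q (r - y)))"
  proof (rule integral_cong)
    fix y
    show "r * (?d y * ?d (r - y)) - 2 * real l * (?t y * ?d (r - y)) - 2 * real l * (?d y * ?t (r - y))
          = 4 * (real l)\<^sup>2 * r * (?q y * ?q (r - y))"
      unfolding dtp_def lm tp_Suc[OF m1] by (simp add: algebra_simps power2_eq_square)
  qed
  also have "\<dots> = 4 * (real l)\<^sup>2 * r * self_conv (l - 1) r"
    using sc_int[OF m1, of r] lm by simp
  finally show ?thesis .
qed

definition Iop :: "(real \<Rightarrow> real) \<Rightarrow> real \<Rightarrow> real" where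
  "Iop h r = integral {r..3} (\<lambda>u. u * h u)"

definition good :: "(real \<Rightarrow> real) \<Rightarrow> bool" where
  "good h \<longleftrightarrow> continuous_on {0..3} h \<and> (\<forall>u\<in>{2..3}. h u = 0)"

lemma Iop_deriv:
  assumes "good h" "r \<in> {0<..<3}"
  shows "(Iop h has_real_derivative - (r * h r)) (at r)"
proof -
  have c: "continuous_on {0..3} (\<lambda>u. u * h u)"
    using assms(1) unfolding good_def by (intro continuous_intros) auto
  have "((\<lambda>x. integral {x..3} (\<lambda>u. u * h u)) has_real_derivative - (r * h r)) (at r within {0..3})"
    by (rule integral_has_real_derivative'[OF c]) (use assms in auto)
  moreover have "at r within {0..3} = at r"
    by (rule at_within_interior) (use assms in auto)
  ultimately show ?thesis unfolding Iop_def[abs_def] by simp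
qed

lemma Iop_good:
  assumes "good h"
  shows "good (Iop h)"
proof -
  have c: "continuous_on {0..3} (\<lambda>u. u * h u)"
    using assms(1) unfolding good_def by (intro continuous_intros) auto
  have "continuous_on {0..3} (Iop h)"
    unfolding Iop_def[abs_def]
    by (rule indefinite_integral_continuous_1'[OF integrable_continuous_real[OF c]])
  moreover have "Iop h u = 0" if "u \<in> {2..3}" for u
  proof -
    have "Iop h u = integral {u..3} (\<lambda>u. 0::real)"
      unfolding Iop_def using assms that unfolding good_def by (intro integral_cong) auto
    then show ?thesis by simp
  qed
  ultimately show ?thesis unfolding good_def by auto
qed

lemma Iop_cong:
  assumes "\<And>u. u \<in> {0<..<3} \<Longrightarrow> f u = g u" "r \<in> {0<..<3}"
  shows "Iop f r = Iop g r"
  unfolding Iop_def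
  by (rule integral_spike[where S="{3}"]) (use assms in auto)

lemma Iop_cmult: "Iop (\<lambda>u. c * f u) r = c * Iop f r"
proof -
  have "Iop (\<lambda>u. c * f u) r = integral {r..3} (\<lambda>u. c * (u * f u))"
    unfolding Iop_def by (simp add: algebra_simps)
  also have "\<dots> = c * Iop f r" unfolding Iop_def by simp
  finally show ?thesis .
qed

lemma Iopn_good: "good h \<Longrightarrow> good ((Iop ^^ j) h)"
  by (induction j) (auto intro: Iop_good)

lemma Iopn_cong:
  assumes "\<And>u. u \<in> {0<..<3} \<Longrightarrow> f u = g u" "r \<in> {0<..<3}"
  shows "(Iop ^^ j) f r = (Iop ^^ j) g r"
  using assms(2)
proof (induction j arbitrary: r)
  case 0 then show ?case using assms(1) by simp
next
  case (Suc j)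
  have "(Iop ^^ Suc j) f r = Iop ((Iop ^^ j) f) r" by simp
  also have "\<dots> = Iop ((Iop ^^ j) g) r" by (rule Iop_cong[OF Suc.IH Suc.prems])
  finally show ?case by simp
qed

lemma Iopn_cmult: "(Iop ^^ j) (\<lambda>u. c * f u) r = c * (Iop ^^ j) f r"
proof (induction j arbitrary: r)
  case 0 then show ?case by simp
next
  case (Suc j)
  have "(Iop ^^ Suc j) (\<lambda>u. c * f u) = Iop ((Iop ^^ j) (\<lambda>u. c * f u))" by simp
  also have "(Iop ^^ j) (\<lambda>u. c * f u) = (\<lambda>u. c * (Iop ^^ j) f u)" using Suc by auto
  finally show ?case by (simp add: Iop_cmult)
qed

lemma Iopn_deriv:
  assumes "good h" "r \<in> {0<..<3}"
  shows "((Iop ^^ Suc j) h has_real_derivative - (r * (Iop ^^ j) h r)) (at r)"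
  using Iop_deriv[OF Iopn_good[OF assms(1)] assms(2)] by simp

lemma deriv_zero_const_open:
  fixes L :: "real \<Rightarrow> real"
  assumes "\<And>r. r \<in> {a<..<b} \<Longrightarrow> (L has_real_derivative 0) (at r)"
    and "x \<in> {a<..<b}" "y \<in> {a<..<b}"
  shows "L x = L y"
proof -
  have "\<exists>c. \<forall>x\<in>{a<..<b}. L x = c"
    by (rule has_field_derivative_zero_constant) (auto intro!: has_field_derivative_at_within assms(1))
  then show ?thesis using assms(2,3) by auto
qed

lemma comm1:
  assumes g: "good h" and c1: "continuous_on {0..3} h1" and z1: "\<forall>u\<in>{2..3}. h1 u = 0"
    and d: "\<And>r. r \<in> {0<..<3} \<Longrightarrow> (h has_real_derivative h1 r) (at r)"
    and r: "r \<in> {0<..<3}"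
  shows "c * Iop h r + r\<^sup>2 * h r = Iop (\<lambda>u. (c - 2) * h u - u * h1 u) r"
proof -
  define k where "k u = (c - 2) * h u - u * h1 u" for u
  have gk: "good k"
  proof -
    have "continuous_on {0..3} k"
      unfolding k_def using g c1 unfolding good_def by (intro continuous_intros) auto
    moreover have "\<forall>u\<in>{2..3}. k u = 0" using g z1 unfolding good_def k_def by simp
    ultimately show ?thesis unfolding good_def by blast
  qed
  define L where "L r = c * Iop h r + r\<^sup>2 * h r - Iop k r" for r
  have "(L has_real_derivative 0) (at x)" if x: "x \<in> {0<..<3}" for x
  proof -
    have "(L has_real_derivative (c * (- (x * h x)) + (2 * x * h x + x\<^sup>2 * h1 x) - (- (x * k x)))) (at x)"
      unfolding L_def[abs_def]
      by (rule derivative_eq_intros Iop_deriv[OF g x] Iop_deriv[OF gk x] d[OF x] | simp)+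
    moreover have "c * (- (x * h x)) + (2 * x * h x + x\<^sup>2 * h1 x) - (- (x * k x)) = 0"
      unfolding k_def by (simp add: algebra_simps power2_eq_square)
    ultimately show ?thesis by simp
  qed
  then have "L r = L (5/2)" using deriv_zero_const_open[of 0 3 L r "5/2"] r by auto
  also have "L (5/2) = 0"
    using Iop_good[OF g] Iop_good[OF gk] g unfolding L_def good_def by auto
  finally show ?thesis unfolding L_def k_def by simp
qed

lemma commn:
  assumes g: "good h0" and c1: "continuous_on {0..3} h0'" and z1: "\<forall>u\<in>{2..3}. h0' u = 0"
    and d: "\<And>r. r \<in> {0<..<3} \<Longrightarrow> (h0 has_real_derivative h0' r) (at r)"
  shows "r \<in> {0<..<3} \<Longrightarrow> c * (Iop ^^ Suc j) h0 r + r\<^sup>2 * (Iop ^^ j) h0 r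
           = (Iop ^^ Suc j) (\<lambda>u. (c - 2 * real (Suc j)) * h0 u - u * h0' u) r"
proof (induction j arbitrary: c r)
  case 0
  then show ?case using comm1[OF g c1 z1 d, of r c] by simp
next
  case (Suc j)
  let ?h = "(Iop ^^ Suc j) h0"
  have gh: "good ?h" by (rule Iopn_good[OF g])
  have gj: "good ((Iop ^^ j) h0)" by (rule Iopn_good[OF g])
  have c1': "continuous_on {0..3} (\<lambda>u. - (u * (Iop ^^ j) h0 u))"
    using gj unfolding good_def by (intro continuous_intros) auto
  have z1': "\<forall>u\<in>{2..3}. - (u * (Iop ^^ j) h0 u) = 0"
    using gj unfolding good_def by auto
  have "c * (Iop ^^ Suc (Suc j)) h0 r + r\<^sup>2 * (Iop ^^ Suc j) h0 r
      = c * Iop ?h r + r\<^sup>2 * ?h r" by simp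
  also have "\<dots> = Iop (\<lambda>u. (c - 2) * ?h u - u * (- (u * (Iop ^^ j) h0 u))) r"
    by (rule comm1[OF gh c1' z1' Iopn_deriv[OF g] Suc.prems])
  also have "\<dots> = Iop ((Iop ^^ Suc j) (\<lambda>u. (c - 2 - 2 * real (Suc j)) * h0 u - u * h0' u)) r"
  proof (rule Iop_cong[OF _ Suc.prems])
    fix u :: real assume u: "u \<in> {0<..<3}"
    have "(c - 2) * ?h u - u * (- (u * (Iop ^^ j) h0 u)) = (c - 2) * ?h u + u\<^sup>2 * (Iop ^^ j) h0 u"
      by (simp add: power2_eq_square)
    also have "\<dots> = (Iop ^^ Suc j) (\<lambda>u. (c - 2 - 2 * real (Suc j)) * h0 u - u * h0' u) u"
      by (rule Suc.IH[OF u])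
    finally show "(c - 2) * ?h u - u * (- (u * (Iop ^^ j) h0 u)) = \<dots>" .
  qed
  also have "\<dots> = (Iop ^^ Suc (Suc j)) (\<lambda>u. (c - 2 * real (Suc (Suc j))) * h0 u - u * h0' u) r"
    by (simp add: algebra_simps)
  finally show ?case .
qed

definition c0 :: "nat \<Rightarrow> real" where
  "c0 l = pochhammer 1 l / pochhammer (3/2) l"

definition Sf :: "nat \<Rightarrow> real \<Rightarrow> real" where
  "Sf l s = (\<Sum>n\<le>l. (-1)^n * real (l choose n) * s^(2*n+1) / real (2*n+1))"

definition Gf :: "nat \<Rightarrow> real \<Rightarrow> real" where
  "Gf l r = 2^(l+1) * fact l * (c0 l - Sf l (r/2))"

definition Gh :: "nat \<Rightarrow> real \<Rightarrow> real" where
  "Gh l r = (if r \<le> 2 then Gf l r else 0)"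

definition Gd :: "nat \<Rightarrow> real \<Rightarrow> real" where
  "Gd l r = (if r \<le> 2 then - (2^l * fact l * (1 - r\<^sup>2/4)^l) else 0)"

lemma binom_neg: "(1 - x)^l = (\<Sum>n\<le>l. (-1)^n * real (l choose n) * x^n)" for x :: real
proof -
  have "(1 - x)^l = ((-x) + 1)^l" by simp
  also have "\<dots> = (\<Sum>n\<le>l. real (l choose n) * (-x)^n * 1^(l-n))" by (rule binomial_ring)
  also have "\<dots> = (\<Sum>n\<le>l. (-1)^n * real (l choose n) * x^n)"
    by (intro sum.cong refl) (simp add: power_minus')
  finally show ?thesis .
qed

lemma Sf_alt: "Sf l s = (\<Sum>n\<le>l. ((-1)^n * real (l choose n) / real (2*n+1)) * s^(2*n+1))"
  unfolding Sf_def by (rule sum.cong[OF refl]) simp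

lemma Sf_deriv: "(Sf l has_real_derivative (1 - s\<^sup>2)^l) (at s)"
proof -
  have "((\<lambda>s. \<Sum>n\<le>l. ((-1)^n * real (l choose n) / real (2*n+1)) * s^(2*n+1)) has_real_derivative
     (\<Sum>n\<le>l. ((-1)^n * real (l choose n) / real (2*n+1)) * (real (2*n+1) * s^(2*n)))) (at s)"
    apply (intro DERIV_sum DERIV_cmult)
    using DERIV_pow[of "2*_+1" s] by simp
  moreover have "(\<Sum>n\<le>l. ((-1)^n * real (l choose n) / real (2*n+1)) * (real (2*n+1) * s^(2*n))) = (1 - s\<^sup>2)^l"
    unfolding binom_neg by (rule sum.cong[OF refl]) (simp add: power_mult[symmetric])
  ultimately show ?thesis unfolding Sf_alt[abs_def] by simp
qed

lemma Sf_0: "Sf l 0 = 0" unfolding Sf_def by simp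

lemma Sf_recur:
  assumes "l \<ge> 1"
  shows "real (2*l+1) * Sf l s - s * (1 - s\<^sup>2)^l = 2 * real l * Sf (l - 1) s"
proof -
  obtain m where lm: "l = Suc m" using assms by (cases l) auto
  define L where "L s = real (2*l+1) * Sf l s - s * (1 - s\<^sup>2)^l - 2 * real l * Sf (l - 1) s" for s
  have D: "(L has_real_derivative 0) (at x)" for x
  proof -
    have "(L has_real_derivative (real (2*l+1) * (1 - x\<^sup>2)^l - ((1 - x\<^sup>2)^l + x * (real l * (1 - x\<^sup>2)^(l-1) * (- (2 * x))))
              - 2 * real l * (1 - x\<^sup>2)^(l-1))) (at x)"
      unfolding L_def[abs_def]
      by (rule derivative_eq_intros Sf_deriv refl | simp)+
    moreover have "real (2*l+1) * (1 - x\<^sup>2)^l - ((1 - x\<^sup>2)^l + x * (real l * (1 - x\<^sup>2)^(l-1) * (- (2 * x))))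
              - 2 * real l * (1 - x\<^sup>2)^(l-1) = 0"
      unfolding lm by (simp add: algebra_simps power2_eq_square)
    ultimately show ?thesis by simp
  qed
  have "L s = L 0" by (rule deriv_zero_const_open[of "-(\<bar>s\<bar>+1)" "\<bar>s\<bar>+1"]) (use D in \<open>auto simp: abs_if\<close>)
  also have "L 0 = 0" unfolding L_def by (simp add: Sf_0)
  finally show ?thesis unfolding L_def by simp
qed

lemma c0_recur:
  assumes "l \<ge> 1"
  shows "real (2*l+1) * c0 l = 2 * real l * c0 (l - 1)"
proof -
  obtain m where lm: "l = Suc m" using assms by (cases l) auto
  have p: "pochhammer (3/2::real) m > 0" by (rule pochhammer_pos) simp
  have q: "3/2 + real m > 0" by simp
  have "c0 (Suc m) = c0 m * ((1 + real m) / (3/2 + real m))"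
    unfolding c0_def pochhammer_Suc using p q by (simp add: field_simps)
  then show ?thesis unfolding lm using q by (simp add: field_simps)
qed

lemma c0_Sf: "c0 l = Sf l 1"
proof (induction l)
  case 0 then show ?case by (simp add: c0_def Sf_def)
next
  case (Suc m)
  have "real (2 * Suc m + 1) * c0 (Suc m) = 2 * real (Suc m) * c0 m"
    using c0_recur[of "Suc m"] by simp
  moreover have "real (2 * Suc m + 1) * Sf (Suc m) 1 = 2 * real (Suc m) * Sf m 1"
    using Sf_recur[of "Suc m" 1] by simp
  ultimately show ?case using Suc by (metis add_gr_0 of_nat_0_less_iff order_less_irrefl zero_less_one mult_cancel_left)
qed

lemma Gf_2: "Gf l 2 = 0"
  unfolding Gf_def using c0_Sf by simp

lemma Gf_deriv: "(Gf l has_real_derivative - (2^l * fact l * (1 - r\<^sup>2/4)^l)) (at r)"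
proof -
  have "(Gf l has_real_derivative 2^(l+1) * fact l * (- ((1 - (r/2)\<^sup>2)^l * (1/2)))) (at r)"
    unfolding Gf_def[abs_def]
    by (rule derivative_eq_intros DERIV_chain2[OF Sf_deriv] refl | simp)+
  then show ?thesis by (simp add: power_divide mult.assoc)
qed

lemma Gf_recur:
  assumes "l \<ge> 1"
  shows "real (2*l+1) * Gf l r + r * (2^l * fact l * (1 - r\<^sup>2/4)^l) = 4 * (real l)\<^sup>2 * Gf (l - 1) r"
proof -
  obtain m where lm: "l = Suc m" using assms by (cases l) auto
  have A: "real (2*l+1) * c0 l = 2 * real l * c0 (l - 1)" by (rule c0_recur[OF assms])
  have B: "real (2*l+1) * Sf l (r/2) - (r/2) * (1 - (r/2)\<^sup>2)^l = 2 * real l * Sf (l - 1) (r/2)"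
    by (rule Sf_recur[OF assms])
  have "real (2*l+1) * Gf l r + r * (2^l * fact l * (1 - r\<^sup>2/4)^l)
      = 2^(l+1) * fact l * (real (2*l+1) * c0 l - (real (2*l+1) * Sf l (r/2) - (r/2) * (1 - (r/2)\<^sup>2)^l))"
    unfolding Gf_def by (simp add: algebra_simps power_divide)
  also have "\<dots> = 2^(l+1) * fact l * (2 * real l) * (c0 (l - 1) - Sf (l - 1) (r/2))"
    unfolding A B by (simp add: algebra_simps)
  also have "\<dots> = 4 * (real l)\<^sup>2 * Gf (l - 1) r"
    unfolding Gf_def lm by (simp add: algebra_simps power2_eq_square)
  finally show ?thesis .
qed

lemma Gh_good: "good (Gh l)"
proof -
  have "continuous_on {0..3} (\<lambda>x. if x \<le> 2 then Gf l x else 0)"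
  proof (rule continuous_on_cases_le)
    show "continuous_on {x \<in> {0..3}. x \<le> 2} (Gf l)"
      unfolding Gf_def[abs_def] Sf_def by (intro continuous_intros) auto
  qed (auto intro: continuous_intros simp: Gf_2)
  then show ?thesis unfolding good_def Gh_def[abs_def] using Gf_2 by auto
qed

lemma Gd_cont: "l \<ge> 1 \<Longrightarrow> continuous_on {0..3} (Gd l)"
  unfolding Gd_def[abs_def]
  by (rule continuous_on_cases_le) (auto intro!: continuous_intros)

lemma Gd_zero: "l \<ge> 1 \<Longrightarrow> \<forall>u\<in>{2..3}. Gd l u = 0"
  unfolding Gd_def by auto

lemma Gh_deriv:
  assumes l: "l \<ge> 1" and r: "r \<in> {0<..<3}"
  shows "(Gh l has_real_derivative Gd l r) (at r)"
proof (cases "r < 2")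
  case True
  have "(Gf l has_real_derivative Gd l r) (at r)" using Gf_deriv[of l r] True by (simp add: Gd_def)
  then show ?thesis
    by (rule has_field_derivative_transform_within_open[where S="{..<2}"]) (use True in \<open>auto simp: Gh_def\<close>)
next
  case False
  show ?thesis
  proof (cases "r > 2")
    case True
    have "((\<lambda>_. 0) has_real_derivative Gd l r) (at r)" using True by (simp add: Gd_def)
    then show ?thesis
      by (rule has_field_derivative_transform_within_open[where S="{2<..}"]) (use True in \<open>auto simp: Gh_def\<close>)
  next
    case False
    with \<open>\<not> r < 2\<close> have r2: "r = 2" by auto
    have D0: "Gd l 2 = 0" using l by (simp add: Gd_def)
    have A: "(Gh l has_real_derivative 0) (at 2 within {..2})"
    proof -
      have "(Gf l has_real_derivative 0) (at 2)"
        using Gf_deriv[of l 2] l by (simp add: zero_power)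
      then have "(Gf l has_real_derivative 0) (at 2 within {..2})"
        by (rule has_field_derivative_at_within)
      then show ?thesis
        by (rule has_field_derivative_transform_within[where d=1]) (auto simp: Gh_def)
    qed
    have B: "(Gh l has_real_derivative 0) (at 2 within {2..})"
    proof -
      have "((\<lambda>_. 0) has_real_derivative 0) (at 2 within {2..})" by simp
      then show ?thesis
        by (rule has_field_derivative_transform_within[where d=1]) (auto simp: Gh_def Gf_2)
    qed
    show ?thesis using deriv_split_at[OF A B] r2 D0 by simp
  qed
qed

lemma Gh_recur:
  assumes "l \<ge> 1"
  shows "real (2*l+1) * Gh l u - u * Gd l u = 4 * (real l)\<^sup>2 * Gh (l - 1) u"
  using Gf_recur[OF assms, of u] unfolding Gh_def Gd_def by auto

lemma ftc_real:
  fixes f f' :: "real \<Rightarrow> real"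
  assumes "a \<le> b" "\<And>x. (f has_real_derivative f' x) (at x)"
  shows "integral {a..b} f' = f b - f a"
proof -
  have "(f' has_integral (f b - f a)) {a..b}"
    by (rule fundamental_theorem_of_calculus[OF assms(1)])
       (auto simp: has_real_derivative_iff_has_vector_derivative[symmetric]
             intro: has_field_derivative_at_within assms(2))
  then show ?thesis by (rule integral_unique)
qed

lemma base_case:
  assumes r: "r \<in> {0<..<3}"
  shows "self_conv 1 r = Iop (Gh 1) r"
proof (cases "r < 2")
  case False
  have "self_conv 1 r = 0" using sc_zero[of 1 r] False by simp
  moreover have "Iop (Gh 1) r = 0"
    using Iop_good[OF Gh_good[of 1]] False r unfolding good_def by auto
  ultimately show ?thesis by simp
next
  case True
  define P where "P r = 16/15 - 4*r\<^sup>2/3 + 2*r^3/3 - r^5/30" for r :: real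
  have c: "continuous_on UNIV (\<lambda>y. trunc_pow 1 y * trunc_pow 1 (r - y))"
    by (intro continuous_intros continuous_on_compose2[OF tp_cont]) auto
  have "self_conv 1 r = integral {-1..1} (\<lambda>y. trunc_pow 1 y * trunc_pow 1 (r - y))"
    by (rule sc_int) simp
  also have "\<dots> = integral {-1..r-1} (\<lambda>y. trunc_pow 1 y * trunc_pow 1 (r - y))
                + integral {r-1..1} (\<lambda>y. trunc_pow 1 y * trunc_pow 1 (r - y))"
    by (rule Henstock_Kurzweil_Integration.integral_combine[symmetric]) (use r True integrable_continuous_real[OF continuous_on_subset[OF c], of "-1" 1] in auto)
  also have "integral {-1..r-1} (\<lambda>y. trunc_pow 1 y * trunc_pow 1 (r - y)) = integral {-1..r-1} (\<lambda>y. 0)"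
    by (rule integral_cong) (auto simp: tp_zero)
  also have "integral {r-1..1} (\<lambda>y. trunc_pow 1 y * trunc_pow 1 (r - y))
      = integral {r-1..1} (\<lambda>y. (1 - r\<^sup>2) + 2*r*y - (2 - r\<^sup>2)*y\<^sup>2 - 2*r*y^3 + y^4)"
  proof (rule integral_cong)
    fix y assume y: "y \<in> {r-1..1}"
    then have "\<bar>y\<bar> \<le> 1" "\<bar>r - y\<bar> \<le> 1" using r by auto
    then show "trunc_pow 1 y * trunc_pow 1 (r - y) = (1 - r\<^sup>2) + 2*r*y - (2 - r\<^sup>2)*y\<^sup>2 - 2*r*y^3 + y^4"
      by (simp add: tp_inside algebra_simps power2_eq_square power3_eq_cube power4_eq_xxxx)
  qed
  also have "\<dots> = (\<lambda>y. (1 - r\<^sup>2)*y + r*y\<^sup>2 - (2 - r\<^sup>2)*y^3/3 - r*y^4/2 + y^5/5) 1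
                 - (\<lambda>y. (1 - r\<^sup>2)*y + r*y\<^sup>2 - (2 - r\<^sup>2)*y^3/3 - r*y^4/2 + y^5/5) (r - 1)"
    by (rule ftc_real) (use r True in \<open>auto intro!: derivative_eq_intros simp: field_simps power2_eq_square power3_eq_cube power4_eq_xxxx\<close>)
  also have "\<dots> = P r" unfolding P_def by (simp add: field_simps numeral_eq_Suc)
  finally have L: "self_conv 1 r = P r" by simp
  have "Iop (Gh 1) r = integral {r..2} (\<lambda>u. u * Gh 1 u) + integral {2..3} (\<lambda>u. u * Gh 1 u)"
    unfolding Iop_def
  proof (rule Henstock_Kurzweil_Integration.integral_combine[symmetric])
    have cG: "continuous_on {0..3} (\<lambda>u. u * Gh 1 u)"
      using Gh_good[of 1] by (auto simp: good_def intro!: continuous_intros)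
    show "(\<lambda>u. u * Gh 1 u) integrable_on {r..3}"
      by (rule integrable_continuous_real[OF continuous_on_subset[OF cG]]) (use r in auto)
  qed (use True in auto)
  also have "integral {2..3} (\<lambda>u. u * Gh 1 u) = integral {2..3::real} (\<lambda>u. 0::real)"
    by (rule integral_cong) (use Gh_good[of 1] in \<open>auto simp: good_def\<close>)
  also have "integral {r..2} (\<lambda>u. u * Gh 1 u) = integral {r..2} (\<lambda>u. 8/3*u - 2*u\<^sup>2 + u^4/6)"
  proof (rule integral_cong)
    fix u assume "u \<in> {r..2}"
    then show "u * Gh 1 u = 8/3*u - 2*u\<^sup>2 + u^4/6"
      by (simp add: Gh_def Gf_def c0_def Sf_def algebra_simps power2_eq_square power3_eq_cube power4_eq_xxxx)
  qed
  also have "\<dots> = (\<lambda>u. 4*u\<^sup>2/3 - 2*u^3/3 + u^5/30) 2 - (\<lambda>u. 4*u\<^sup>2/3 - 2*u^3/3 + u^5/30) r"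
    by (rule ftc_real) (use True in \<open>auto intro!: derivative_eq_intros simp: field_simps power2_eq_square power3_eq_cube power4_eq_xxxx\<close>)
  finally have R: "Iop (Gh 1) r = P r" by (simp add: P_def)
  show ?thesis using L R by simp
qed

lemma ode_unique:
  fixes W W1 W2 :: "real \<Rightarrow> real" and n :: nat
  assumes n: "n \<ge> 1"
    and d1: "\<And>r. r \<in> {0<..<3} \<Longrightarrow> (W has_real_derivative W1 r) (at r)"
    and d2: "\<And>r. r \<in> {0<..<3} \<Longrightarrow> (W1 has_real_derivative W2 r) (at r)"
    and eq: "\<And>r. r \<in> {0<..<3} \<Longrightarrow> r * W2 r - real n * W1 r = 0"
    and z: "\<And>r. r \<in> {2<..<3} \<Longrightarrow> W r = 0"
    and r: "r \<in> {0<..<3}"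
  shows "W r = 0"
proof -
  have W1z: "W1 (5/2) = 0"
  proof -
    have "((\<lambda>_. 0) has_real_derivative 0) (at (5/2::real))" by simp
    then have "(W has_real_derivative 0) (at (5/2::real))"
      by (rule has_field_derivative_transform_within_open[where S="{2<..<3}"]) (use z in auto)
    then show ?thesis using d1[of "5/2"] DERIV_unique by auto
  qed
  define V where "V r = W1 r / r^n" for r
  have "(V has_real_derivative 0) (at x)" if x: "x \<in> {0<..<3}" for x
  proof -
    have "(V has_real_derivative (W2 x * x^n - W1 x * (real n * x^(n-1))) / (x^n * x^n)) (at x)"
      unfolding V_def[abs_def]
      by (rule derivative_eq_intros d2[OF x] refl | use x in simp)+
    moreover have "W2 x * x^n - W1 x * (real n * x^(n-1)) = 0"
    proof -
      have "x^n = x * x^(n-1)" using n by (metis Suc_diff_le diff_Suc_1 power_Suc)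
      then have "W2 x * x^n - W1 x * (real n * x^(n-1)) = x^(n-1) * (x * W2 x - real n * W1 x)"
        by (simp add: algebra_simps)
      then show ?thesis using eq[OF x] by simp
    qed
    ultimately show ?thesis by simp
  qed
  then have V: "V x = V (5/2)" if "x \<in> {0<..<3}" for x
    using deriv_zero_const_open[of 0 3 V x "5/2"] that by auto
  have W1_0: "W1 x = 0" if x: "x \<in> {0<..<3}" for x
  proof -
    have "V x = 0" using V[OF x] W1z unfolding V_def by simp
    then show ?thesis using x unfolding V_def by simp
  qed
  have "(W has_real_derivative 0) (at x)" if x: "x \<in> {0<..<3}" for x
    using d1[OF x] W1_0[OF x] by simp
  then have "W r = W (5/2)" using deriv_zero_const_open[of 0 3 W r "5/2"] r by auto
  also have "\<dots> = 0" using z by simp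
  finally show ?thesis .
qed

lemma main_conv:
  assumes "l \<ge> 1" "r \<in> {0<..<3}"
  shows "self_conv l r = (Iop ^^ l) (Gh l) r"
  using assms
proof (induction l arbitrary: r rule: nat_induct_at_least)
  case base
  then show ?case using base_case by simp
next
  case (Suc l)
  define L where "L = Suc l"
  have L2: "L \<ge> 2" using Suc.hyps unfolding L_def by simp
  define K where "K = (Iop ^^ l) (Gh L)"
  define K2 where "K2 = (Iop ^^ (l - 1)) (Gh L)"
  have lK: "K = (Iop ^^ Suc (l - 1)) (Gh L)" using Suc.hyps unfolding K_def by simp
  have HK: "(Iop ^^ L) (Gh L) = Iop K" unfolding L_def K_def by simp
  have dH: "((Iop ^^ L) (Gh L) has_real_derivative - (x * K x)) (at x)" if "x \<in> {0<..<3}" for x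
    unfolding L_def K_def by (rule Iopn_deriv[OF Gh_good that])
  have dK: "(K has_real_derivative - (x * K2 x)) (at x)" if "x \<in> {0<..<3}" for x
    unfolding lK K2_def by (rule Iopn_deriv[OF Gh_good that])
  define W where "W x = self_conv L x - (Iop ^^ L) (Gh L) x" for x
  define W1 where "W1 x = F1 L x - (- (x * K x))" for x
  define W2 where "W2 x = F2 L x - (- (K x + x * (- (x * K2 x))))" for x
  have d1: "(W has_real_derivative W1 x) (at x)" if x: "x \<in> {0<..<3}" for x
    unfolding W_def[abs_def] W1_def
    by (intro derivative_intros sc_deriv[OF L2] dH[OF x])
  have d2: "(W1 has_real_derivative W2 x) (at x)" if x: "x \<in> {0<..<3}" for x
    unfolding W1_def[abs_def] W2_def
    by (rule derivative_eq_intros F1_deriv[OF L2] dK[OF x] refl | simp)+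
  have eq: "x * W2 x - real (4 * L) * W1 x = 0" if x: "x \<in> {0<..<3}" for x
  proof -
    have rec: "x * F2 L x - 4 * real L * F1 L x = 4 * (real L)\<^sup>2 * x * self_conv l x"
      using sc_recur[OF L2, of x] unfolding L_def by simp
    have IH: "self_conv l x = (Iop ^^ l) (Gh l) x" using Suc.IH[OF x] .
    have cm: "real (4 * L - 1) * (Iop ^^ Suc (l - 1)) (Gh L) x + x\<^sup>2 * (Iop ^^ (l - 1)) (Gh L) x
       = (Iop ^^ Suc (l - 1)) (\<lambda>u. (real (4 * L - 1) - 2 * real (Suc (l - 1))) * Gh L u - u * Gd L u) x"
      by (rule commn[OF Gh_good Gd_cont Gd_zero Gh_deriv x]) (use L2 in auto)
    have "(Iop ^^ Suc (l - 1)) (\<lambda>u. (real (4 * L - 1) - 2 * real (Suc (l - 1))) * Gh L u - u * Gd L u) x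
        = (Iop ^^ Suc (l - 1)) (\<lambda>u. 4 * (real L)\<^sup>2 * Gh l u) x"
    proof (rule Iopn_cong[OF _ x])
      fix u :: real
      have "real (4 * L - 1) - 2 * real (Suc (l - 1)) = real (2 * L + 1)"
        using Suc.hyps unfolding L_def by (simp add: of_nat_diff)
      then show "(real (4 * L - 1) - 2 * real (Suc (l - 1))) * Gh L u - u * Gd L u = 4 * (real L)\<^sup>2 * Gh l u"
        using Gh_recur[of L u] L2 unfolding L_def by (simp add: algebra_simps)
    qed
    also have "\<dots> = 4 * (real L)\<^sup>2 * self_conv l x"
      unfolding Iopn_cmult IH using Suc.hyps by simp
    finally have A: "real (4 * L - 1) * K x + x\<^sup>2 * K2 x = 4 * (real L)\<^sup>2 * self_conv l x"
      using cm unfolding lK[symmetric] K2_def by simp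
    have "real (4 * L - 1) = 4 * real L - 1" using L2 by (simp add: of_nat_diff)
    then have A': "(4 * real L - 1) * K x + x\<^sup>2 * K2 x = 4 * (real L)\<^sup>2 * self_conv l x" using A by simp
    have Ax: "x * ((4 * real L - 1) * K x + x\<^sup>2 * K2 x) = x * (4 * (real L)\<^sup>2 * self_conv l x)"
      using A' by simp
    have "x * W2 x - real (4 * L) * W1 x = (x * F2 L x - 4 * real L * F1 L x) - x * ((4 * real L - 1) * K x + x\<^sup>2 * K2 x)"
      unfolding W1_def W2_def by (simp add: algebra_simps power2_eq_square)
    also have "\<dots> = 0" unfolding rec Ax by (simp add: algebra_simps)
    finally show ?thesis .
  qed
  have z: "W x = 0" if x: "x \<in> {2<..<3}" for x
  proof -
    have "self_conv L x = 0" using sc_zero[of L x] L2 x by simp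
    moreover have "(Iop ^^ L) (Gh L) x = 0"
      using Iopn_good[OF Gh_good, of L L] x unfolding good_def by auto
    ultimately show ?thesis unfolding W_def by simp
  qed
  have "W r = 0"
    by (rule ode_unique[of "4 * L" W W1 W2, OF _ d1 d2 eq z Suc.prems]) (use L2 in auto)
  then show ?case unfolding W_def L_def by simp
qed

lemma opD_iter:
  assumes l: "l \<ge> 1"
  shows "k \<le> l \<Longrightarrow> r \<in> {0<..<3} \<Longrightarrow> (opD ^^ k) (self_conv l) r = (Iop ^^ (l - k)) (Gh l) r"
proof (induction k arbitrary: r)
  case 0 then show ?case using main_conv[OF l] by simp
next
  case (Suc k)
  have r0: "r \<noteq> 0" using Suc.prems by auto
  define j where "j = l - Suc k"
  have lk: "l - k = Suc j" using Suc.prems unfolding j_def by simp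
  have "((Iop ^^ Suc j) (Gh l) has_real_derivative - (r * (Iop ^^ j) (Gh l) r)) (at r)"
    by (rule Iopn_deriv[OF Gh_good Suc.prems(2)])
  then have "((opD ^^ k) (self_conv l) has_real_derivative - (r * (Iop ^^ j) (Gh l) r)) (at r)"
    by (rule has_field_derivative_transform_within_open[where S="{0<..<3}"])
       (use Suc.prems Suc.IH lk in auto)
  then have "deriv ((opD ^^ k) (self_conv l)) r = - (r * (Iop ^^ j) (Gh l) r)"
    by (rule DERIV_imp_deriv)
  moreover have "(opD ^^ Suc k) (self_conv l) r = - (1 / r) * deriv ((opD ^^ k) (self_conv l)) r"
    using opD_def[of "(opD ^^ k) (self_conv l)" r] by simp
  ultimately show ?case using r0 unfolding j_def by simp
qed

lemma wu_raw_eq: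
  assumes "l \<ge> 1" "0 < r" "r \<le> 2"
  shows "wu_raw l l r = Gf l r"
  using opD_iter[OF assms(1) order.refl, of r] assms unfolding wu_raw_def Gh_def by simp

lemma wu_eq:
  assumes "l \<ge> 1" "0 \<le> r" "r \<le> 2"
  shows "wu l l r = Gf l r"
proof (cases "r = 0")
  case False
  then show ?thesis using wu_raw_eq[OF assms(1) _ assms(3)] assms(2) unfolding wu_def by simp
next
  case True
  have "isCont (Gf l) 0" using Gf_deriv by (rule DERIV_isCont)
  then have "(Gf l \<longlongrightarrow> Gf l 0) (at_right 0)"
    unfolding isCont_def by (rule tendsto_within_subset) simp
  moreover have "eventually (\<lambda>x. Gf l x = wu_raw l l x) (at_right 0)"
    by (rule eventually_mono[OF eventually_at_right_real[of 0 2]]) (use wu_raw_eq[OF assms(1)] in auto)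
  ultimately have "(wu_raw l l \<longlongrightarrow> Gf l 0) (at_right 0)"
    by (rule Lim_transform_eventually)
  then have "Lim (at_right 0) (wu_raw l l) = Gf l 0"
    by (rule tendsto_Lim[rotated]) simp
  then show ?thesis using True unfolding wu_def by simp
qed

lemma poch_ratio: "pochhammer (1/2::real) n / pochhammer (3/2) n = 1 / real (2*n+1)"
proof -
  have p: "pochhammer (3/2::real) n > 0" by (rule pochhammer_pos) simp
  have "pochhammer (1/2::real) (Suc n) = 1/2 * pochhammer (3/2) n"
    by (simp add: pochhammer_rec)
  moreover have "pochhammer (1/2::real) (Suc n) = pochhammer (1/2) n * (1/2 + real n)"
    by (simp add: pochhammer_Suc)
  ultimately have "pochhammer (1/2::real) n * (1/2 + real n) = 1/2 * pochhammer (3/2) n" by simp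
  then show ?thesis using p by (simp add: field_simps)
qed

lemma poch_neg: "n \<le> l \<Longrightarrow> pochhammer (- real l) n / fact n = (-1)^n * real (l choose n)"
proof -
  have "real (l choose n) = (real l gchoose n)" by (simp add: binomial_gbinomial)
  also have "\<dots> = (-1)^n * pochhammer (- real l) n / fact n" by (rule gbinomial_pochhammer)
  finally have "(-1)^n * real (l choose n) = (-1)^n * ((-1)^n * pochhammer (- real l) n / fact n)" by simp
  also have "\<dots> = pochhammer (- real l) n / fact n" by (simp flip: power_mult_distrib)
  finally show ?thesis by simp
qed

lemma rhs_eq:
  "2 ^ (l + 1) * Gamma (real l + 1) *
     (pochhammer 1 l / pochhammer (3/2) l - r / 2 * hyp2F1 (- real l) (1/2) (3/2) (r\<^sup>2 / 4)) = Gf l r"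
proof -
  have G: "Gamma (real l + 1) = fact l" using Gamma_fact[of l] by (simp add: add.commute)
  have "hyp2F1 (- real l) (1/2) (3/2) (r\<^sup>2 / 4)
      = (\<Sum>n\<le>l. pochhammer (- real l) n * pochhammer (1/2) n / pochhammer (3/2) n * (r\<^sup>2/4) ^ n / fact n)"
    unfolding hyp2F1_def
    by (rule suminf_finite) (auto simp: pochhammer_of_nat_eq_0_iff not_le)
  also have "\<dots> = (\<Sum>n\<le>l. (-1)^n * real (l choose n) / real (2*n+1) * (r\<^sup>2/4) ^ n)"
  proof (rule sum.cong[OF refl])
    fix n assume "n \<in> {..l}"
    then have A: "pochhammer (- real l) n / fact n = (-1)^n * real (l choose n)" by (simp add: poch_neg)
    have p: "pochhammer (3/2::real) n \<noteq> 0" using pochhammer_pos[of "3/2::real" n] by simp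
    have "pochhammer (- real l) n * pochhammer (1/2) n / pochhammer (3/2) n * (r\<^sup>2/4) ^ n / fact n
        = (pochhammer (- real l) n / fact n) * (pochhammer (1/2) n / pochhammer (3/2) n) * (r\<^sup>2/4) ^ n"
      by simp
    also have "\<dots> = (-1)^n * real (l choose n) / real (2*n+1) * (r\<^sup>2/4) ^ n"
      unfolding A poch_ratio by simp
    finally show "pochhammer (- real l) n * pochhammer (1/2) n / pochhammer (3/2) n * (r\<^sup>2/4) ^ n / fact n
        = (-1)^n * real (l choose n) / real (2*n+1) * (r\<^sup>2/4) ^ n" .
  qed
  finally have H: "hyp2F1 (- real l) (1/2) (3/2) (r\<^sup>2 / 4) = \<dots>" .
  have "r / 2 * (\<Sum>n\<le>l. (-1)^n * real (l choose n) / real (2*n+1) * (r\<^sup>2/4) ^ n) = Sf l (r/2)"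
    unfolding Sf_def sum_distrib_left
  proof (rule sum.cong[OF refl])
    fix n
    have h2: "(r/2)^(2*n) = (r\<^sup>2/4)^n"
      by (simp add: power_mult power_divide)
    have "(r/2)^(2*n+1) = r/2 * (r\<^sup>2/4)^n"
      using h2 by (simp add: mult.commute)
    then show "r / 2 * ((-1)^n * real (l choose n) / real (2*n+1) * (r\<^sup>2/4) ^ n)
        = (-1)^n * real (l choose n) * (r/2)^(2*n+1) / real (2*n+1)" by (simp only:) (simp add: field_simps)
  qed
  then show ?thesis unfolding Gf_def c0_def G H by simp
qed

theorem theorem4p3:
  fixes l :: nat and r :: real
  assumes "l \<ge> 1" and "0 \<le> r" and "r \<le> 2"
  shows "wu l l r = 2 ^ (l + 1) * Gamma (real l + 1) *
           (pochhammer 1 l / pochhammer (3/2) l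
            - r / 2 * hyp2F1 (- real l) (1/2) (3/2) (r\<^sup>2 / 4))"
  using wu_eq[OF assms] rhs_eq[of l r] by simp

end
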